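(* Let $p$ be a probability density on $(0,\infty)$, $m>0$, $0<t<T$ with $m(T-t)>1$, and $P_{tT}>0$. Define $$S(t,y)=P_{tT}\frac{N(y)}{D(y)},\quad N(y)=\int_y^\infty p(x)x^{2-mT}(x-y)^{m(T-t)-1}dx,\quad D(y)=\int_y^\infty p(x)x^{1-mT}(x-y)^{m(T-t)-1}dx .$$ Let $I\subset[0,\infty)$ be an open interval such that for all $y\in I$: $\int_y^\infty p(x)\,dx>0$; the integrals $\int_y^\infty p(x)x^{j-mT}(x-y)^{m(T-t)-i}dx$ are finite for $j\in\{1,2,3\}$, $i\in\{0,1,2\}$; and $N$, $D$ are differentiable on $I$ with derivatives obtained by differentiating under the integral sign. Then $$\frac{\partial S(t,y)}{\partial y}=P_{tT}\,[m(T-t)-1]\left(\frac{\int_y^\infty p\,\alpha^2\,dx\int_y^\infty p\,\beta^2\,dx}{\big(\int_y^\infty p\,\alpha\beta\,dx\big)^2}-1\right)>0\quad (y\in I),$$ where $\alpha^2(x)=x^{1-mT}(x-y)^{m(T-t)}$ and $\beta^2(x)=x^{1-mT}(x-y)^{m(T-t)-2}$ for $x>y$; in particular $S(t,\cdot)$ is strictly increasing on $I$. *)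

theory Defs
  imports "HOL-Analysis.Analysis"
begin

definition Nfun :: "(real \<Rightarrow> real) \<Rightarrow> real \<Rightarrow> real \<Rightarrow> real \<Rightarrow> real \<Rightarrow> real" where
  "Nfun p m T t y =
     (LINT x:{y<..}|lborel. p x * x powr (2 - m * T) * (x - y) powr (m * (T - t) - 1))"

definition Dfun :: "(real \<Rightarrow> real) \<Rightarrow> real \<Rightarrow> real \<Rightarrow> real \<Rightarrow> real \<Rightarrow> real" where
  "Dfun p m T t y =
     (LINT x:{y<..}|lborel. p x * x powr (1 - m * T) * (x - y) powr (m * (T - t) - 1))"

definition Sfun :: "real \<Rightarrow> (real \<Rightarrow> real) \<Rightarrow> real \<Rightarrow> real \<Rightarrow> real \<Rightarrow> real \<Rightarrow> real" where
  "Sfun P p m T t y = P * Nfun p m T t y / Dfun p m T t y"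

definition alpha :: "real \<Rightarrow> real \<Rightarrow> real \<Rightarrow> real \<Rightarrow> real \<Rightarrow> real" where
  "alpha m T t y x = sqrt (x powr (1 - m * T) * (x - y) powr (m * (T - t)))"

definition beta :: "real \<Rightarrow> real \<Rightarrow> real \<Rightarrow> real \<Rightarrow> real \<Rightarrow> real" where
  "beta m T t y x = sqrt (x powr (1 - m * T) * (x - y) powr (m * (T - t) - 2))"

end

theory Submission
  imports Defs
begin

lemma pos_lemma:
  fixes p g :: "real \<Rightarrow> real"
  assumes int: "set_integrable lborel {y<..} (\<lambda>x. p x * g x)"
    and pint: "set_integrable lborel {y<..} p"
    and pn: "\<And>x. x > y \<Longrightarrow> p x \<ge> 0" and gn: "\<And>x. x > y \<Longrightarrow> g x \<ge> 0"
    and gp: "\<And>x. x > y \<Longrightarrow> x \<noteq> c \<Longrightarrow> g x > 0"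
    and tail: "(LINT x:{y<..}|lborel. p x) > 0"
  shows "(LINT x:{y<..}|lborel. p x * g x) > 0"
proof -
  let ?f = "\<lambda>x. indicator {y<..} x *\<^sub>R (p x * g x)"
  have i: "integrable lborel ?f" using int by (simp add: set_integrable_def)
  have nn: "AE x in lborel. 0 \<le> ?f x"
    by (auto simp: indicator_def intro!: mult_nonneg_nonneg pn gn)
  have ge: "0 \<le> (LINT x:{y<..}|lborel. p x * g x)"
    unfolding set_lebesgue_integral_def using integral_nonneg_AE[OF nn] .
  moreover have "(LINT x:{y<..}|lborel. p x * g x) \<noteq> 0"
  proof
    assume "(LINT x:{y<..}|lborel. p x * g x) = 0"
    then have "AE x in lborel. ?f x = 0"
      using integral_nonneg_eq_0_iff_AE[OF i nn] by (simp add: set_lebesgue_integral_def)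
    then have ae: "AE x in lborel. indicator {y<..} x *\<^sub>R p x = 0"
      using AE_lborel_singleton[of c]
    proof eventually_elim
      case (elim x)
      then show ?case using gp[of x] by (auto simp: indicator_def)
    qed
    have m: "(\<lambda>x. indicator {y<..} x *\<^sub>R p x) \<in> borel_measurable lborel"
      using pint unfolding set_integrable_def by (rule borel_measurable_integrable)
    have "(LINT x:{y<..}|lborel. p x) = 0" unfolding set_lebesgue_integral_def
      using integral_cong_AE[OF m _ ae] by simp
    with tail show False by simp
  qed
  ultimately show ?thesis by simp
qed
theorem mainTheorem13:
  fixes p :: "real \<Rightarrow> real" and m T t P :: real and I :: "real set"
  assumes p_nonneg: "\<And>x. x > 0 \<Longrightarrow> p x \<ge> 0"
    and p_int: "set_integrable lborel {0<..} p"
    and p_total: "(LINT x:{0<..}|lborel. p x) = 1"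
    and m_pos: "m > 0" and t_pos: "0 < t" and tT: "t < T"
    and mTt: "m * (T - t) > 1"
    and P_pos: "P > 0"
    and I_open: "open I" and I_interval: "is_interval I" and I_nonneg: "I \<subseteq> {0..}"
    and tail_pos: "\<And>y. y \<in> I \<Longrightarrow> (LINT x:{y<..}|lborel. p x) > 0"
    and finite_ints: "\<And>y j i. y \<in> I \<Longrightarrow> j \<in> {1, 2, 3} \<Longrightarrow> i \<in> {0, 1, 2} \<Longrightarrow>
        set_integrable lborel {y<..}
          (\<lambda>x. p x * x powr (j - m * T) * (x - y) powr (m * (T - t) - i))"
    and N_deriv: "\<And>y. y \<in> I \<Longrightarrow>
        (Nfun p m T t has_real_derivative
           (- (m * (T - t) - 1)) *
           (LINT x:{y<..}|lborel. p x * x powr (2 - m * T) * (x - y) powr (m * (T - t) - 2)))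
        (at y)"
    and D_deriv: "\<And>y. y \<in> I \<Longrightarrow>
        (Dfun p m T t has_real_derivative
           (- (m * (T - t) - 1)) *
           (LINT x:{y<..}|lborel. p x * x powr (1 - m * T) * (x - y) powr (m * (T - t) - 2)))
        (at y)"
  shows "(\<forall>y\<in>I.
           let A = (LINT x:{y<..}|lborel. p x * (alpha m T t y x)\<^sup>2);
               B = (LINT x:{y<..}|lborel. p x * (beta m T t y x)\<^sup>2);
               C = (LINT x:{y<..}|lborel. p x * (alpha m T t y x * beta m T t y x));
               S' = P * (m * (T - t) - 1) * (A * B / C\<^sup>2 - 1)
           in (Sfun P p m T t has_real_derivative S') (at y) \<and> S' > 0)
         \<and> strict_mono_on I (Sfun P p m T t)"
proof -
  have key: "\<forall>y\<in>I.
           let A = (LINT x:{y<..}|lborel. p x * (alpha m T t y x)\<^sup>2);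
               B = (LINT x:{y<..}|lborel. p x * (beta m T t y x)\<^sup>2);
               C = (LINT x:{y<..}|lborel. p x * (alpha m T t y x * beta m T t y x));
               S' = P * (m * (T - t) - 1) * (A * B / C\<^sup>2 - 1)
           in (Sfun P p m T t has_real_derivative S') (at y) \<and> S' > 0"
  proof
    fix y assume yI: "y \<in> I"
    have y0: "y \<ge> 0" using yI I_nonneg by auto
    define k where "k = m * (T - t)"
    define a where "a = 1 - m * T"
    define A0 where "A0 = (LINT x:{y<..}|lborel. p x * x powr (1 - m * T) * (x - y) powr (m * (T - t)))"
    define C0 where "C0 = (LINT x:{y<..}|lborel. p x * x powr (1 - m * T) * (x - y) powr (m * (T - t) - 1))"
    define B0 where "B0 = (LINT x:{y<..}|lborel. p x * x powr (1 - m * T) * (x - y) powr (m * (T - t) - 2))"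
    define N2 where "N2 = (LINT x:{y<..}|lborel. p x * x powr (2 - m * T) * (x - y) powr (m * (T - t) - 2))"
    have i10: "set_integrable lborel {y<..} (\<lambda>x. p x * x powr (1 - m * T) * (x - y) powr (m * (T - t)))"
      using finite_ints[OF yI, of 1 0] by simp
    have i11: "set_integrable lborel {y<..} (\<lambda>x. p x * x powr (1 - m * T) * (x - y) powr (m * (T - t) - 1))"
      using finite_ints[OF yI, of 1 1] by simp
    have i12: "set_integrable lborel {y<..} (\<lambda>x. p x * x powr (1 - m * T) * (x - y) powr (m * (T - t) - 2))"
      using finite_ints[OF yI, of 1 2] by simp
    have pint: "set_integrable lborel {y<..} p"
      by (rule set_integrable_subset[OF p_int]) (use y0 in auto)
    have tail: "(LINT x:{y<..}|lborel. p x) > 0" using tail_pos[OF yI] .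
    have pn: "\<And>x. x > y \<Longrightarrow> p x \<ge> 0" using p_nonneg y0 by auto
    have up1: "(x - y) powr k = (x - y) powr (k - 1) * (x - y)" if "x > y" for x k
      using powr_add[of "x - y" "k - 1" 1] that by simp
    have xp1: "x powr (2 - m * T) = x powr (1 - m * T) * x" if "x > y" for x
      using powr_add[of x "1 - m * T" 1] that y0 by simp
    have NA: "Nfun p m T t y = A0 + y * C0"
    proof -
      have "Nfun p m T t y = (LINT x:{y<..}|lborel. p x * x powr (1 - m * T) * (x - y) powr (m * (T - t))
              + y * (p x * x powr (1 - m * T) * (x - y) powr (m * (T - t) - 1)))"
        unfolding Nfun_def
      proof (rule set_lebesgue_integral_cong, simp, intro allI impI)
        fix x :: real assume "x \<in> {y<..}"
        then have x: "x > y" by simp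
        show "p x * x powr (2 - m * T) * (x - y) powr (m * (T - t) - 1) =
          p x * x powr (1 - m * T) * (x - y) powr (m * (T - t)) + y * (p x * x powr (1 - m * T) * (x - y) powr (m * (T - t) - 1))"
          unfolding xp1[OF x] up1[OF x, of "m * (T - t)"] by (simp add: algebra_simps)
      qed
      also have "\<dots> = A0 + y * C0"
        unfolding A0_def C0_def
        by (subst set_integral_add(2)[OF i10 set_integrable_mult_right[OF i11]]) simp
      finally show ?thesis .
    qed
    have N2C: "N2 = C0 + y * B0"
    proof -
      have "N2 = (LINT x:{y<..}|lborel. p x * x powr (1 - m * T) * (x - y) powr (m * (T - t) - 1)
              + y * (p x * x powr (1 - m * T) * (x - y) powr (m * (T - t) - 2)))"
        unfolding N2_def
      proof (rule set_lebesgue_integral_cong, simp, intro allI impI)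
        fix x :: real assume "x \<in> {y<..}"
        then have x: "x > y" by simp
        have e: "(x - y) powr (m * (T - t) - 1) = (x - y) powr (m * (T - t) - 2) * (x - y)"
          using up1[OF x, of "m * (T - t) - 1"] by simp
        show "p x * x powr (2 - m * T) * (x - y) powr (m * (T - t) - 2) =
          p x * x powr (1 - m * T) * (x - y) powr (m * (T - t) - 1) + y * (p x * x powr (1 - m * T) * (x - y) powr (m * (T - t) - 2))"
          unfolding xp1[OF x] e by (simp add: algebra_simps)
      qed
      also have "\<dots> = C0 + y * B0"
        unfolding B0_def C0_def
        by (subst set_integral_add(2)[OF i11 set_integrable_mult_right[OF i12]]) simp
      finally show ?thesis .
    qed
    have gpos: "\<And>x r. x > y \<Longrightarrow> x powr (1 - m * T) * (x - y) powr r > 0"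
      using y0 by auto
    have B0pos: "B0 > 0"
    proof -
      have "(LINT x:{y<..}|lborel. p x * (x powr (1 - m * T) * (x - y) powr (m * (T - t) - 2))) > 0"
        by (rule pos_lemma[where c = 0]) (use i12 pint pn gpos tail in \<open>auto simp: mult.assoc less_imp_le\<close>)
      then show ?thesis by (simp add: B0_def mult.assoc)
    qed
    have C0pos: "C0 > 0"
    proof -
      have "(LINT x:{y<..}|lborel. p x * (x powr (1 - m * T) * (x - y) powr (m * (T - t) - 1))) > 0"
        by (rule pos_lemma[where c = 0]) (use i11 pint pn gpos tail in \<open>auto simp: mult.assoc less_imp_le\<close>)
      then show ?thesis by (simp add: C0_def mult.assoc)
    qed
    define l where "l = C0 / B0"
    have Q: "A0 - 2 * l * C0 + l^2 * B0 > 0"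
    proof -
      let ?f = "\<lambda>x. p x * x powr (1 - m * T) * (x - y) powr (m * (T - t))
            - (2 * l) * (p x * x powr (1 - m * T) * (x - y) powr (m * (T - t) - 1))
            + l^2 * (p x * x powr (1 - m * T) * (x - y) powr (m * (T - t) - 2))"
      have fi: "set_integrable lborel {y<..} ?f"
        by (intro set_integral_add(1) set_integral_diff(1) set_integrable_mult_right i10 i11 i12)
      have fv: "(LINT x:{y<..}|lborel. ?f x) = A0 - 2 * l * C0 + l^2 * B0"
        unfolding A0_def B0_def C0_def
        by (simp add: set_integral_add(2)[OF set_integral_diff(1)[OF i10 set_integrable_mult_right[OF i11]] set_integrable_mult_right[OF i12]]
                      set_integral_diff(2)[OF i10 set_integrable_mult_right[OF i11]])
      have pt: "?f x = p x * (x powr (1 - m * T) * (x - y) powr (m * (T - t) - 2) * ((x - y) - l)^2)"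
        if x: "x > y" for x
      proof -
        have e: "(x - y) powr (m * (T - t)) = (x - y) powr (m * (T - t) - 2) * (x - y) * (x - y)"
          using up1[OF x, of "m * (T - t)"] up1[OF x, of "m * (T - t) - 1"] by simp
        have e2: "(x - y) powr (m * (T - t) - 1) = (x - y) powr (m * (T - t) - 2) * (x - y)"
          using up1[OF x, of "m * (T - t) - 1"] by simp
        show ?thesis unfolding e e2 by (simp add: algebra_simps power2_eq_square)
      qed
      have fi2: "set_integrable lborel {y<..} (\<lambda>x. p x * (x powr (1 - m * T) * (x - y) powr (m * (T - t) - 2) * ((x - y) - l)^2))"
      proof -
        have "(\<lambda>x. indicator {y<..} x *\<^sub>R ?f x) =
            (\<lambda>x. indicator {y<..} x *\<^sub>R (p x * (x powr (1 - m * T) * (x - y) powr (m * (T - t) - 2) * ((x - y) - l)^2)))"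
          by (rule ext) (auto simp: indicator_def pt)
        then show ?thesis using fi unfolding set_integrable_def by simp
      qed
      have "(LINT x:{y<..}|lborel. p x * (x powr (1 - m * T) * (x - y) powr (m * (T - t) - 2) * ((x - y) - l)^2)) > 0"
      proof (rule pos_lemma[where c = "y + l", OF fi2 pint pn _ _ tail])
        fix x assume "x > y"
        then show "0 \<le> x powr (1 - m * T) * (x - y) powr (m * (T - t) - 2) * (x - y - l)\<^sup>2"
          by simp
      next
        fix x assume "x > y" "x \<noteq> y + l"
        then show "0 < x powr (1 - m * T) * (x - y) powr (m * (T - t) - 2) * (x - y - l)\<^sup>2"
          using gpos[of x] by simp
      qed
      also have "(LINT x:{y<..}|lborel. p x * (x powr (1 - m * T) * (x - y) powr (m * (T - t) - 2) * ((x - y) - l)^2))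
          = (LINT x:{y<..}|lborel. ?f x)"
        by (rule set_lebesgue_integral_cong) (auto simp: pt)
      finally show ?thesis using fv by simp
    qed
    have AB: "A0 * B0 - C0^2 > 0"
    proof -
      have "B0 * (A0 - 2 * l * C0 + l^2 * B0) = A0 * B0 - C0^2"
        using B0pos by (simp add: l_def field_simps power2_eq_square)
      with Q B0pos show ?thesis by (metis mult_pos_pos)
    qed
    have Aeq: "(LINT x:{y<..}|lborel. p x * (alpha m T t y x)\<^sup>2) = A0"
      unfolding A0_def
      by (rule set_lebesgue_integral_cong) (auto simp: alpha_def mult.assoc)
    have Beq: "(LINT x:{y<..}|lborel. p x * (beta m T t y x)\<^sup>2) = B0"
      unfolding B0_def
      by (rule set_lebesgue_integral_cong) (auto simp: beta_def mult.assoc)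
    have Ceq: "(LINT x:{y<..}|lborel. p x * (alpha m T t y x * beta m T t y x)) = C0"
      unfolding C0_def
    proof (rule set_lebesgue_integral_cong, simp, intro allI impI)
      fix x :: real assume "x \<in> {y<..}"
      then have x: "x > y" by simp
      have e: "(x - y) powr (m * (T - t)) * (x - y) powr (m * (T - t) - 2)
          = ((x - y) powr (m * (T - t) - 1))^2"
        using up1[OF x, of "m * (T - t)"] up1[OF x, of "m * (T - t) - 1"]
        by (simp add: power2_eq_square)
      have "alpha m T t y x * beta m T t y x
          = sqrt ((x powr (1 - m * T) * (x - y) powr (m * (T - t) - 1))^2)"
        unfolding alpha_def beta_def real_sqrt_mult[symmetric]
      proof (rule arg_cong[where f = sqrt])
        let ?X = "x powr (1 - m * T)"
        have "?X * (x - y) powr (m * (T - t)) * (?X * (x - y) powr (m * (T - t) - 2))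
           = ?X^2 * ((x - y) powr (m * (T - t)) * (x - y) powr (m * (T - t) - 2))"
          by (simp add: power2_eq_square mult_ac)
        also have "\<dots> = (?X * (x - y) powr (m * (T - t) - 1))^2"
          unfolding e by (simp add: power_mult_distrib)
        finally show "?X * (x - y) powr (m * (T - t)) * (?X * (x - y) powr (m * (T - t) - 2))
           = (?X * (x - y) powr (m * (T - t) - 1))^2" .
      qed
      also have "\<dots> = x powr (1 - m * T) * (x - y) powr (m * (T - t) - 1)"
        by simp
      finally show "p x * (alpha m T t y x * beta m T t y x) = p x * x powr (1 - m * T) * (x - y) powr (m * (T - t) - 1)"
        by simp
    qed
    have Deq: "Dfun p m T t y = C0" unfolding Dfun_def C0_def ..
    have dN: "(Nfun p m T t has_real_derivative (- (m * (T - t) - 1)) * N2) (at y)"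
      using N_deriv[OF yI] unfolding N2_def .
    have dD: "(Dfun p m T t has_real_derivative (- (m * (T - t) - 1)) * B0) (at y)"
      using D_deriv[OF yI] unfolding B0_def .
    have Sf: "Sfun P p m T t = (\<lambda>y. P * Nfun p m T t y / Dfun p m T t y)"
      by (rule ext) (simp add: Sfun_def)
    have dS: "(Sfun P p m T t has_real_derivative
        ((P * ((- (m * (T - t) - 1)) * N2)) * Dfun p m T t y - (P * Nfun p m T t y) * ((- (m * (T - t) - 1)) * B0))
          / (Dfun p m T t y * Dfun p m T t y)) (at y)"
      unfolding Sf
      by (rule DERIV_divide[OF DERIV_cmult[OF dN] dD]) (use C0pos Deq in simp)
    have val: "((P * ((- (m * (T - t) - 1)) * N2)) * Dfun p m T t y - (P * Nfun p m T t y) * ((- (m * (T - t) - 1)) * B0))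
          / (Dfun p m T t y * Dfun p m T t y) = P * (m * (T - t) - 1) * (A0 * B0 / C0\<^sup>2 - 1)"
      unfolding Deq NA N2C using C0pos
      by (simp add: field_simps power2_eq_square)
    have pos: "P * (m * (T - t) - 1) * (A0 * B0 / C0\<^sup>2 - 1) > 0"
    proof -
      have "A0 * B0 / C0\<^sup>2 > 1" using AB C0pos by (simp add: field_simps)
      then show ?thesis using P_pos mTt by simp
    qed
    show "let A = (LINT x:{y<..}|lborel. p x * (alpha m T t y x)\<^sup>2);
               B = (LINT x:{y<..}|lborel. p x * (beta m T t y x)\<^sup>2);
               C = (LINT x:{y<..}|lborel. p x * (alpha m T t y x * beta m T t y x));
               S' = P * (m * (T - t) - 1) * (A * B / C\<^sup>2 - 1)
           in (Sfun P p m T t has_real_derivative S') (at y) \<and> S' > 0"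
      unfolding Let_def Aeq Beq Ceq using dS val pos by simp
  qed
  have ex: "\<exists>D. (Sfun P p m T t has_real_derivative D) (at y) \<and> D > 0" if "y \<in> I" for y
    using key that unfolding Let_def by blast
  have "strict_mono_on I (Sfun P p m T t)"
  proof (rule strict_mono_onI)
    fix r s assume r: "r \<in> I" and s: "s \<in> I" and rs: "r < s"
    show "Sfun P p m T t r < Sfun P p m T t s"
    proof (rule DERIV_pos_imp_increasing[OF rs])
      fix x assume "r \<le> x" "x \<le> s"
      then have "x \<in> I" using I_interval r s unfolding is_interval_1 by blast
      then show "\<exists>y. DERIV (Sfun P p m T t) x :> y \<and> y > 0" using ex by blast
    qed
  qed
  with key show ?thesis by blast
qed

end
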